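(* Let $d\geq 0$ and $0<i\leq d+1$ be integers, and write $d+1=qi+r$ with integers $q\geq 0$, $1\leq r\leq i$. Let $\Delta\in\mathcal{C}(i,d)$. Then $f_0(\Delta)\geq f_0(S(i,d))=q(i+1)+r+1$.
   Context: All simplicial complexes are finite abstract simplicial complexes; $f_j(\Delta)$ denotes the number of $j$-dimensional faces of $\Delta$. A set $F$ of vertices is a missing face of $\Delta$ if $F\notin\Delta$ but every proper subset of $F$ is in $\Delta$; its dimension is $|F|-1$. $\mathcal{C}(i,d)$ denotes the family of $d$-dimensional simplicial complexes $\Delta$ with $\tilde H_d(\Delta;\mathbb{Z})\neq 0$ (reduced homology) and with no missing faces of dimension $>i$. For integers $d\geq 0$, $i>0$ with $d+1=qi+r$ ($q\geq 0$, $1\leq r\leq i$), $S(i,d)$ is the simplicial join of $q$ copies of $\partial\sigma^i$ and one copy of $\partial\sigma^r$ on pairwise disjoint vertex sets, where $\partial\sigma^k$ is the boundary complex of the $k$-simplex. *)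

theory Defs
  imports Main
begin

text \<open>Finite abstract simplicial complexes: a finite nonempty family of finite sets
  closed under taking subsets (so the empty face belongs to every complex).\<close>
definition simplicial_complex :: "'a set set \<Rightarrow> bool" where
  "simplicial_complex \<Delta> \<longleftrightarrow> finite \<Delta> \<and> \<Delta> \<noteq> {} \<and> (\<forall>F\<in>\<Delta>. finite F)
     \<and> (\<forall>F\<in>\<Delta>. \<forall>G. G \<subseteq> F \<longrightarrow> G \<in> \<Delta>)"

definition vertices :: "'a set set \<Rightarrow> 'a set" where
  "vertices \<Delta> = \<Union>\<Delta>"

definition has_dim :: "'a set set \<Rightarrow> nat \<Rightarrow> bool" where
  "has_dim \<Delta> d \<longleftrightarrow> (\<exists>F\<in>\<Delta>. card F = d + 1) \<and> (\<forall>F\<in>\<Delta>. card F \<le> d + 1)"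

definition fvec :: "nat \<Rightarrow> 'a set set \<Rightarrow> nat" where
  "fvec j \<Delta> = card {F\<in>\<Delta>. card F = j + 1}"

definition missing_face :: "'a set set \<Rightarrow> 'a set \<Rightarrow> bool" where
  "missing_face \<Delta> F \<longleftrightarrow> F \<subseteq> vertices \<Delta> \<and> F \<notin> \<Delta> \<and> (\<forall>G. G \<subset> F \<longrightarrow> G \<in> \<Delta>)"

text \<open>Augmented (reduced) simplicial chain complex with integer coefficients.
  A chain of faces with n elements (dimension n-1; n = 0 is the empty face, giving
  the augmentation) is an integer function supported on such faces. Orientation is
  induced by the linear order on vertices.\<close>
definition chains :: "'a set set \<Rightarrow> nat \<Rightarrow> ('a set \<Rightarrow> int) set" where
  "chains \<Delta> n = {c. \<forall>F. c F \<noteq> 0 \<longrightarrow> F \<in> \<Delta> \<and> card F = n}"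

definition bd :: "('a::linorder) set set \<Rightarrow> ('a set \<Rightarrow> int) \<Rightarrow> 'a set \<Rightarrow> int" where
  "bd \<Delta> c G = (\<Sum>v\<in>vertices \<Delta> - G. (-1) ^ card {x\<in>G. x < v} * c (insert v G))"

definition reduced_homology_nonzero :: "('a::linorder) set set \<Rightarrow> nat \<Rightarrow> bool" where
  "reduced_homology_nonzero \<Delta> d \<longleftrightarrow>
     (\<exists>c\<in>chains \<Delta> (d + 1). bd \<Delta> c = (\<lambda>_. 0) \<and> \<not> (\<exists>b\<in>chains \<Delta> (d + 2). bd \<Delta> b = c))"

definition class_C :: "nat \<Rightarrow> nat \<Rightarrow> ('a::linorder) set set \<Rightarrow> bool" where
  "class_C i d \<Delta> \<longleftrightarrow> simplicial_complex \<Delta> \<and> has_dim \<Delta> d \<and> reduced_homology_nonzero \<Delta> d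
     \<and> (\<forall>F. missing_face \<Delta> F \<longrightarrow> card F \<le> i + 1)"

text \<open>S(i,d): with d+1 = q*i + r, 1 \<le> r \<le> i (so q = d div i, r = d mod i + 1),
  the join of q copies of the boundary of the i-simplex (vertex blocks
  {j} \<times> {0..i}, j < q) and the boundary of the r-simplex (block {q} \<times> {0..r}).
  A face of the join is a union of a face of each factor.\<close>
definition S_block :: "nat \<Rightarrow> nat \<Rightarrow> nat \<Rightarrow> (nat \<times> nat) set" where
  "S_block i d j = (if j < d div i then {j} \<times> {0..i} else {d div i} \<times> {0..d mod i + 1})"

definition S_complex :: "nat \<Rightarrow> nat \<Rightarrow> (nat \<times> nat) set set" where
  "S_complex i d = {F. F \<subseteq> (\<Union>j\<le>d div i. S_block i d j)
      \<and> (\<forall>j\<le>d div i. F \<inter> S_block i d j \<subset> S_block i d j)}"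

end

theory Submission
  imports Defs
begin


lemma exists_missing:
  assumes "finite X" "X \<notin> \<Delta>"
  shows "\<exists>M\<subseteq>X. M \<notin> \<Delta> \<and> (\<forall>G. G \<subset> M \<longrightarrow> G \<in> \<Delta>)"
  using assms
proof (induction X rule: finite_psubset_induct)
  case (psubset A)
  show ?case
  proof (cases "\<forall>G. G \<subset> A \<longrightarrow> G \<in> \<Delta>")
    case True then show ?thesis using psubset.prems by blast
  next
    case False
    then obtain G where G: "G \<subset> A" "G \<notin> \<Delta>" by blast
    obtain M where M: "M \<subseteq> G" "M \<notin> \<Delta>" "\<forall>G'. G' \<subset> M \<longrightarrow> G' \<in> \<Delta>"
      using psubset.IH[OF G] by blast
    have "M \<subseteq> A" using M(1) G(1) by blast
    then show ?thesis using M(2,3) by blast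
  qed
qed

lemma main_bound:
  fixes i :: nat
  assumes ipos: "0 < i"
  shows "\<And>\<Delta> S. finite (\<Union>\<Delta>) \<Longrightarrow> (\<forall>F\<in>\<Delta>. finite F) \<Longrightarrow> (\<forall>F\<in>\<Delta>. \<forall>G. G \<subseteq> F \<longrightarrow> G \<in> \<Delta>)
    \<Longrightarrow> (\<forall>F\<in>\<Delta>. card F \<le> n)
    \<Longrightarrow> (\<forall>H. H \<subseteq> \<Union>\<Delta> \<and> H \<notin> \<Delta> \<and> (\<forall>G. G \<subset> H \<longrightarrow> G \<in> \<Delta>) \<longrightarrow> card H \<le> i+1)
    \<Longrightarrow> S \<subseteq> \<Delta> \<Longrightarrow> S \<noteq> {} \<Longrightarrow> (\<forall>F\<in>S. card F = n)
    \<Longrightarrow> (\<forall>F\<in>S. \<forall>x\<in>F. \<exists>F'\<in>S. F' \<noteq> F \<and> F - {x} \<subseteq> F')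
    \<Longrightarrow> 1 \<le> n \<Longrightarrow> n + 1 + (n - 1) div i \<le> card (\<Union>\<Delta>)"
proof (induction n rule: less_induct)
  case (less n \<Delta> S)
  note fin = less.prems(1) and ffin = less.prems(2) and dc = less.prems(3)
    and cardb = less.prems(4) and miss = less.prems(5) and SD = less.prems(6)
    and Sne = less.prems(7) and Scard = less.prems(8) and pc = less.prems(9) and n1 = less.prems(10)
  obtain F where F: "F \<in> S" using Sne by blast
  have FD: "F \<in> \<Delta>" using F SD by blast
  have Fc: "card F = n" using F Scard by blast
  have Ff: "finite F" using FD ffin by blast
  have "F \<noteq> {}" using Fc n1 by (metis card.empty not_one_le_zero)
  then obtain x where x: "x \<in> F" by blast
  obtain F' where F': "F' \<in> S" "F' \<noteq> F" "F - {x} \<subseteq> F'" using pc[rule_format, OF F x] by blast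
  have F'D: "F' \<in> \<Delta>" using F' SD by blast
  have F'c: "card F' = n" using F' Scard by blast
  have F'f: "finite F'" using F'D ffin by blast
  have "\<not> F' \<subseteq> F"
  proof
    assume "F' \<subseteq> F" then have "F' = F" using card_subset_eq[OF Ff] F'c Fc by simp
    thus False using F'(2) by simp
  qed
  then obtain y where y: "y \<in> F'" "y \<notin> F" by blast
  have cFx: "card (F - {x}) = n - 1" using Fc x Ff by simp
  have "insert y (F - {x}) \<subseteq> F'" using y F' by blast
  moreover have "card (insert y (F - {x})) = n" using cFx y Ff n1 by simp
  ultimately have F'eq: "F' = insert y (F - {x})" using card_subset_eq[OF F'f] F'c by metis
  have xy: "x \<noteq> y" using x y by blast
  define X where "X = insert y F"
  have Xf: "finite X" using Ff X_def by simp
  have "card X = n + 1" using X_def Ff y Fc by simp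
  hence "X \<notin> \<Delta>" using cardb by fastforce
  then obtain M where M: "M \<subseteq> X" "M \<notin> \<Delta>" "\<forall>G. G \<subset> M \<longrightarrow> G \<in> \<Delta>"
    using exists_missing[OF Xf] by blast
  have XV: "X \<subseteq> \<Union>\<Delta>" using X_def FD F'D y by blast
  have MV: "M \<subseteq> \<Union>\<Delta>" using M(1) XV by blast
  have Mc: "card M \<le> i + 1" using miss[rule_format, of M] M MV by blast
  have Mf: "finite M" using M Xf finite_subset by blast
  have yM: "y \<in> M"
  proof (rule ccontr)
    assume "y \<notin> M" hence "M \<subseteq> F" using M X_def by blast
    thus False using dc FD M by blast
  qed
  have xM: "x \<in> M"
  proof (rule ccontr)
    assume "x \<notin> M" hence "M \<subseteq> F'" using M X_def F'eq by blast
    thus False using dc F'D M by blast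
  qed
  define \<sigma> where "\<sigma> = M - {y}"
  have \<sigma>F: "\<sigma> \<subseteq> F" using \<sigma>_def M X_def by blast
  have \<sigma>D: "\<sigma> \<in> \<Delta>" using dc FD \<sigma>F by blast
  have \<sigma>f: "finite \<sigma>" using \<sigma>F Ff finite_subset by blast
  define k where "k = card \<sigma>"
  have kc: "card M = k + 1" using k_def \<sigma>_def card.remove[OF Mf yM] by simp
  have ki: "k \<le> i" using kc Mc by simp
  have "x \<in> \<sigma>" using \<sigma>_def xM xy by blast
  hence "card \<sigma> > 0" using \<sigma>f card_gt_0_iff by blast
  hence k1: "1 \<le> k" using k_def by simp
  have kn: "k \<le> n" using k_def card_mono[OF Ff \<sigma>F] Fc by simp
  have My: "M = insert y \<sigma>" using \<sigma>_def yM by blast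
  define L where "L = {G. G \<inter> \<sigma> = {} \<and> G \<union> \<sigma> \<in> \<Delta>}"
  define T where "T = {G. G \<inter> \<sigma> = {} \<and> G \<union> \<sigma> \<in> S}"
  have LV: "\<Union>L \<subseteq> \<Union>\<Delta> - insert y \<sigma>"
  proof
    fix v assume "v \<in> \<Union>L"
    then obtain G where G: "G \<in> L" "v \<in> G" by blast
    have "G \<union> \<sigma> \<in> \<Delta>" "G \<inter> \<sigma> = {}" using G L_def by auto
    moreover have "v \<noteq> y"
    proof
      assume "v = y"
      hence "M \<subseteq> G \<union> \<sigma>" using My G by blast
      thus False using dc \<open>G \<union> \<sigma> \<in> \<Delta>\<close> M by blast
    qed
    ultimately show "v \<in> \<Union>\<Delta> - insert y \<sigma>" using G by blast
  qed
  have yV: "insert y \<sigma> \<subseteq> \<Union>\<Delta>" using My M XV by blast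
  have LVf: "finite (\<Union>L)" using LV fin finite_subset by blast
  have cardsum: "card (\<Union>L) + (k + 1) \<le> card (\<Union>\<Delta>)"
  proof -
    have "card (\<Union>L \<union> insert y \<sigma>) = card (\<Union>L) + card (insert y \<sigma>)"
      by (rule card_Un_disjoint[OF LVf]) (use \<sigma>f LV in auto)
    moreover have "card (insert y \<sigma>) = k + 1" using kc[unfolded My] .
    moreover have "card (\<Union>L \<union> insert y \<sigma>) \<le> card (\<Union>\<Delta>)"
      by (intro card_mono[OF fin]) (use LV yV in blast)
    ultimately show ?thesis by simp
  qed
  show ?case
  proof (cases "k = n")
    case True
    then have "(n - 1) div i = 0" using ki ipos by simp
    then show ?thesis using cardsum True by simp
  next
    case False
    hence kl: "k < n" using kn by simp
    have IH: "(n - k) + 1 + (n - k - 1) div i \<le> card (\<Union>L)"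
    proof (rule less.IH[of "n - k" L T])
      show "n - k < n" using k1 kl by simp
      show "finite (\<Union>L)" by (rule LVf)
      show "\<forall>F\<in>L. finite F" using ffin L_def by auto
      show "\<forall>F\<in>L. \<forall>G. G \<subseteq> F \<longrightarrow> G \<in> L"
      proof (intro ballI allI impI)
        fix G G2 assume "G \<in> L" "G2 \<subseteq> G"
        then have "G2 \<inter> \<sigma> = {}" "G2 \<union> \<sigma> \<subseteq> G \<union> \<sigma>" "G \<union> \<sigma> \<in> \<Delta>" using L_def by auto
        then show "G2 \<in> L" using dc L_def by blast
      qed
      show "\<forall>F\<in>L. card F \<le> n - k"
      proof
        fix G assume G: "G \<in> L"
        then have "G \<inter> \<sigma> = {}" "G \<union> \<sigma> \<in> \<Delta>" using L_def by auto
        moreover have "finite G" using G ffin L_def by auto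
        ultimately have "card (G \<union> \<sigma>) = card G + k" using card_Un_disjoint[of G \<sigma>] \<sigma>f k_def by simp
        moreover have "card (G \<union> \<sigma>) \<le> n" using cardb \<open>G \<union> \<sigma> \<in> \<Delta>\<close> by blast
        ultimately show "card G \<le> n - k" by simp
      qed
      show "\<forall>H. H \<subseteq> \<Union>L \<and> H \<notin> L \<and> (\<forall>G. G \<subset> H \<longrightarrow> G \<in> L) \<longrightarrow> card H \<le> i + 1"
      proof (intro allI impI)
        fix H assume H: "H \<subseteq> \<Union>L \<and> H \<notin> L \<and> (\<forall>G. G \<subset> H \<longrightarrow> G \<in> L)"
        then have H1: "H \<subseteq> \<Union>L" and H2: "H \<notin> L" and H3: "\<forall>G. G \<subset> H \<longrightarrow> G \<in> L" by auto
        have Hs: "H \<inter> \<sigma> = {}" using H1 LV by blast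
        hence HD: "H \<union> \<sigma> \<notin> \<Delta>" using H2 L_def by blast
        have Hf: "finite H" using H1 LVf finite_subset by blast
        have HSf: "finite (H \<union> \<sigma>)" using Hf \<sigma>f by simp
        obtain M2 where M2: "M2 \<subseteq> H \<union> \<sigma>" "M2 \<notin> \<Delta>" "\<forall>G. G \<subset> M2 \<longrightarrow> G \<in> \<Delta>"
          using exists_missing[OF HSf HD] by blast
        have HM2: "H \<subseteq> M2"
        proof
          fix h assume h: "h \<in> H"
          show "h \<in> M2"
          proof (rule ccontr)
            assume "h \<notin> M2"
            have "H - {h} \<subset> H" using h by blast
            hence "H - {h} \<in> L" using H3 by blast
            hence "(H - {h}) \<union> \<sigma> \<in> \<Delta>" using L_def by blast
            moreover have "M2 \<subseteq> (H - {h}) \<union> \<sigma>" using M2 \<open>h \<notin> M2\<close> by blast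
            ultimately show False using dc M2 by blast
          qed
        qed
        have M2V: "M2 \<subseteq> \<Union>\<Delta>" using M2(1) H1 LV yV by blast
        have "card M2 \<le> i + 1" using miss[rule_format, of M2] M2 M2V by blast
        moreover have "finite M2" using M2 Hf \<sigma>f finite_subset by blast
        ultimately show "card H \<le> i + 1" using card_mono[of M2 H] HM2 by simp
      qed
      show "T \<subseteq> L" using SD T_def L_def by blast
      have "(F - \<sigma>) \<union> \<sigma> = F" using \<sigma>F by blast
      moreover have "(F - \<sigma>) \<inter> \<sigma> = {}" by blast
      ultimately have "F - \<sigma> \<in> T" unfolding T_def using F by simp
      thus "T \<noteq> {}" by blast
      show "\<forall>F\<in>T. card F = n - k"
      proof
        fix G assume G: "G \<in> T"
        then have "G \<inter> \<sigma> = {}" "G \<union> \<sigma> \<in> S" using T_def by auto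
        moreover have "finite G" using G ffin T_def SD by auto
        ultimately have "card (G \<union> \<sigma>) = card G + k" using card_Un_disjoint[of G \<sigma>] \<sigma>f k_def by simp
        moreover have "card (G \<union> \<sigma>) = n" using Scard \<open>G \<union> \<sigma> \<in> S\<close> by blast
        ultimately show "card G = n - k" by simp
      qed
      show "\<forall>F\<in>T. \<forall>x\<in>F. \<exists>F'\<in>T. F' \<noteq> F \<and> F - {x} \<subseteq> F'"
      proof (intro ballI)
        fix G z assume G: "G \<in> T" and z: "z \<in> G"
        have Gs: "G \<inter> \<sigma> = {}" "G \<union> \<sigma> \<in> S" using G T_def by auto
        have zGs: "z \<in> G \<union> \<sigma>" using z by blast
        obtain F2 where F2: "F2 \<in> S" "F2 \<noteq> G \<union> \<sigma>" "(G \<union> \<sigma>) - {z} \<subseteq> F2"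
          using pc[rule_format, OF Gs(2) zGs] by blast
        have zs: "z \<notin> \<sigma>" using z Gs(1) by blast
        have sF2: "\<sigma> \<subseteq> F2" using F2(3) zs by blast
        have un: "(F2 - \<sigma>) \<union> \<sigma> = F2" using sF2 by blast
        have "(F2 - \<sigma>) \<inter> \<sigma> = {}" by blast
        hence m1: "F2 - \<sigma> \<in> T" unfolding T_def using F2(1) un by simp
        have m2: "F2 - \<sigma> \<noteq> G"
        proof
          assume "F2 - \<sigma> = G"
          hence "F2 = G \<union> \<sigma>" using un by simp
          thus False using F2(2) by simp
        qed
        have m3: "G - {z} \<subseteq> F2 - \<sigma>" using F2(3) Gs(1) by blast
        show "\<exists>F'\<in>T. F' \<noteq> G \<and> G - {z} \<subseteq> F'"
          using m1 m2 m3 by (intro bexI[of _ "F2 - \<sigma>"]) simp_all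
      qed
      show "1 \<le> n - k" using kl by simp
    qed
    have "n - 1 \<le> (n - k - 1) + i" using ki k1 kl by simp
    hence "(n - 1) div i \<le> ((n - k - 1) + i) div i" by (rule div_le_mono)
    also have "\<dots> = (n - k - 1) div i + 1" using div_add_self2[of i "n - k - 1"] ipos by linarith
    finally show ?thesis using IH cardsum kl by simp
  qed
qed



lemma qr:
  fixes i d q r :: nat
  assumes "0 < i" "d + 1 = q * i + r" "1 \<le> r" "r \<le> i"
  shows "d div i = q" "d mod i + 1 = r"
proof -
  have d: "d = q * i + (r - 1)" using assms by simp
  have "r - 1 < i" using assms by simp
  have e: "d = (r - 1) + q * i" using d by simp
  have "d div i = ((r - 1) + q * i) div i" using e by metis
  also have "\<dots> = q" using \<open>r - 1 < i\<close> assms(1) by simp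
  finally show "d div i = q" .
  have "d mod i = ((r - 1) + q * i) mod i" using e by metis
  also have "\<dots> = r - 1" using \<open>r - 1 < i\<close> by simp
  finally show "d mod i + 1 = r" using assms by simp
qed

lemma singles:
  assumes "\<forall>F\<in>\<Delta>. \<forall>G. G \<subseteq> F \<longrightarrow> G \<in> \<Delta>"
  shows "fvec 0 \<Delta> = card (\<Union>\<Delta>)"
proof -
  have "{F\<in>\<Delta>. card F = 0 + 1} = (\<lambda>v. {v}) ` (\<Union>\<Delta>)"
  proof
    show "{F\<in>\<Delta>. card F = 0 + 1} \<subseteq> (\<lambda>v. {v}) ` (\<Union>\<Delta>)"
    proof
      fix F assume "F \<in> {F\<in>\<Delta>. card F = 0 + 1}"
      then have "F \<in> \<Delta>" "card F = 1" by auto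
      then obtain v where "F = {v}" using card_1_singletonE[OF \<open>card F = 1\<close>] by blast
      then show "F \<in> (\<lambda>v. {v}) ` (\<Union>\<Delta>)" using \<open>F \<in> \<Delta>\<close> by blast
    qed
    show "(\<lambda>v. {v}) ` (\<Union>\<Delta>) \<subseteq> {F\<in>\<Delta>. card F = 0 + 1}"
    proof
      fix F assume "F \<in> (\<lambda>v. {v}) ` (\<Union>\<Delta>)"
      then obtain v G where "F = {v}" "v \<in> G" "G \<in> \<Delta>" by blast
      then show "F \<in> {F\<in>\<Delta>. card F = 0 + 1}" using assms by auto
    qed
  qed
  then show ?thesis unfolding fvec_def by (simp add: card_image)
qed

lemma S_count:
  fixes i d q r :: nat
  assumes "0 < i" "d + 1 = q * i + r" "1 \<le> r" "r \<le> i"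
  shows "fvec 0 (S_complex i d) = q * (i + 1) + r + 1"
proof -
  note qr = qr[OF assms]
  define U where "U = ({..<q} \<times> {0..i}) \<union> ({q} \<times> {0..r})"
  have blk: "S_block i d j = (if j < q then {j} \<times> {0..i} else {q} \<times> {0..r})" for j
    unfolding S_block_def qr by simp
  have U: "(\<Union>j\<le>d div i. S_block i d j) = U"
    unfolding qr blk U_def by (auto split: if_splits)
  have two: "\<exists>a b. a \<noteq> b \<and> a \<in> S_block i d j \<and> b \<in> S_block i d j" for j
  proof (cases "j < q")
    case True
    then show ?thesis unfolding blk using assms by (intro exI[of _ "(j,0)"] exI[of _ "(j,1)"]) auto
  next
    case False
    then show ?thesis unfolding blk using assms by (intro exI[of _ "(q,0)"] exI[of _ "(q,1)"]) auto
  qed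
  have "{F\<in>S_complex i d. card F = 0 + 1} = (\<lambda>v. {v}) ` U"
  proof
    show "{F\<in>S_complex i d. card F = 0 + 1} \<subseteq> (\<lambda>v. {v}) ` U"
    proof
      fix F assume "F \<in> {F\<in>S_complex i d. card F = 0 + 1}"
      then have "F \<in> S_complex i d" "card F = 1" by auto
      then obtain v where "F = {v}" using card_1_singletonE[OF \<open>card F = 1\<close>] by blast
      have "F \<subseteq> (\<Union>j\<le>d div i. S_block i d j)" using \<open>F \<in> S_complex i d\<close> unfolding S_complex_def by simp
      hence "v \<in> U" using U \<open>F = {v}\<close> by simp
      then show "F \<in> (\<lambda>v. {v}) ` U" using \<open>F = {v}\<close> by simp
    qed
    show "(\<lambda>v. {v}) ` U \<subseteq> {F\<in>S_complex i d. card F = 0 + 1}"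
    proof
      fix F assume "F \<in> (\<lambda>v. {v}) ` U"
      then obtain v where v: "F = {v}" "v \<in> U" by blast
      have "\<forall>j\<le>d div i. {v} \<inter> S_block i d j \<subset> S_block i d j"
      proof (intro allI impI)
        fix j
        obtain a b where "a \<noteq> b" "a \<in> S_block i d j" "b \<in> S_block i d j" using two by blast
        note ab = this
        show "{v} \<inter> S_block i d j \<subset> S_block i d j"
        proof (rule psubsetI)
          show "{v} \<inter> S_block i d j \<subseteq> S_block i d j" by (rule Int_lower2)
          show "{v} \<inter> S_block i d j \<noteq> S_block i d j"
          proof
            assume eq: "{v} \<inter> S_block i d j = S_block i d j"
            have "a \<in> {v}" "b \<in> {v}" using ab(2,3) eq by (metis IntD1)+
            thus False using ab(1) by simp
          qed
        qed
      qed
      moreover have "F \<subseteq> (\<Union>j\<le>d div i. S_block i d j)" using v U by simp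
      ultimately have "F \<in> S_complex i d" unfolding S_complex_def using v(1) by simp
      then show "F \<in> {F\<in>S_complex i d. card F = 0 + 1}" using v by simp
    qed
  qed
  then have "fvec 0 (S_complex i d) = card U" unfolding fvec_def by (simp add: card_image)
  also have "card U = q * (i + 1) + (r + 1)"
  proof -
    have "card U = card ({..<q} \<times> {0..i}) + card ({q} \<times> {0..r})"
      unfolding U_def by (rule card_Un_disjoint) auto
    then show ?thesis by (simp add: card_cartesian_product)
  qed
  finally show ?thesis by simp
qed

theorem theorem1p1:
  fixes \<Delta> :: "('a::linorder) set set" and i d q r :: nat
  assumes "0 < i" and "i \<le> d + 1"
    and "d + 1 = q * i + r" and "1 \<le> r" and "r \<le> i"
    and "class_C i d \<Delta>"
  shows "fvec 0 \<Delta> \<ge> fvec 0 (S_complex i d) \<and> fvec 0 (S_complex i d) = q * (i + 1) + r + 1"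
proof -
  have qd: "d div i = q" using qr[OF assms(1,3,4,5)] by simp
  have cnt: "fvec 0 (S_complex i d) = q * (i + 1) + r + 1" using S_count[OF assms(1,3,4,5)] .
  have sc: "simplicial_complex \<Delta>" and hd: "has_dim \<Delta> d" and hn: "reduced_homology_nonzero \<Delta> d"
    and mf: "\<forall>F. missing_face \<Delta> F \<longrightarrow> card F \<le> i + 1"
    using assms(6) unfolding class_C_def by auto
  have fin\<Delta>: "finite \<Delta>" and ffin: "\<forall>F\<in>\<Delta>. finite F" and dc: "\<forall>F\<in>\<Delta>. \<forall>G. G \<subseteq> F \<longrightarrow> G \<in> \<Delta>"
    using sc unfolding simplicial_complex_def by auto
  have fin: "finite (\<Union>\<Delta>)" using fin\<Delta> ffin by blast
  have cardb: "\<forall>F\<in>\<Delta>. card F \<le> d + 1" using hd unfolding has_dim_def by blast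
  obtain c where c: "c \<in> chains \<Delta> (d + 1)" "bd \<Delta> c = (\<lambda>_. 0)"
    and nb: "\<not> (\<exists>b\<in>chains \<Delta> (d + 2). bd \<Delta> b = c)"
    using hn unfolding reduced_homology_nonzero_def by blast
  have "(\<lambda>_. 0) \<in> chains \<Delta> (d + 2)" unfolding chains_def by simp
  moreover have "bd \<Delta> (\<lambda>_. 0) = (\<lambda>_. 0)" unfolding bd_def by simp
  ultimately have cne: "c \<noteq> (\<lambda>_. 0)" using nb c(2) by metis
  define S where "S = {F. c F \<noteq> 0}"
  have SD: "S \<subseteq> \<Delta>" and Scard: "\<forall>F\<in>S. card F = d + 1"
    using c(1) unfolding S_def chains_def by auto
  have Sne: "S \<noteq> {}" using cne unfolding S_def by auto
  have pc: "\<forall>F\<in>S. \<forall>x\<in>F. \<exists>F'\<in>S. F' \<noteq> F \<and> F - {x} \<subseteq> F'"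
  proof (intro ballI, rule ccontr)
    fix F x assume F: "F \<in> S" and x: "x \<in> F" and no: "\<not> (\<exists>F'\<in>S. F' \<noteq> F \<and> F - {x} \<subseteq> F')"
    define R where "R = F - {x}"
    have FD: "F \<in> \<Delta>" using F SD by blast
    have xV: "x \<in> vertices \<Delta> - R" unfolding vertices_def R_def using FD x by blast
    have finV: "finite (vertices \<Delta> - R)" unfolding vertices_def using fin by simp
    have zero: "c (insert v R) = 0" if v: "v \<in> vertices \<Delta> - R - {x}" for v
    proof (rule ccontr)
      assume "c (insert v R) \<noteq> 0"
      hence m1: "insert v R \<in> S" unfolding S_def by simp
      have m2: "insert v R \<noteq> F" using v x unfolding R_def by blast
      have m3: "F - {x} \<subseteq> insert v R" unfolding R_def by blast
      have "\<exists>F'\<in>S. F' \<noteq> F \<and> F - {x} \<subseteq> F'"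
        using m1 m2 m3 by (intro bexI[of _ "insert v R"]) simp_all
      thus False using no by simp
    qed
    have "bd \<Delta> c R = (\<Sum>v\<in>vertices \<Delta> - R. (-1) ^ card {y\<in>R. y < v} * c (insert v R))"
      unfolding bd_def by simp
    also have "\<dots> = (-1) ^ card {y\<in>R. y < x} * c (insert x R)
        + (\<Sum>v\<in>vertices \<Delta> - R - {x}. (-1) ^ card {y\<in>R. y < v} * c (insert v R))"
      by (rule sum.remove[OF finV xV])
    also have "(\<Sum>v\<in>vertices \<Delta> - R - {x}. (-1) ^ card {y\<in>R. y < v} * c (insert v R)) = 0"
      using zero by simp
    also have "insert x R = F" unfolding R_def using x by blast
    finally have "bd \<Delta> c R = (-1) ^ card {y\<in>R. y < x} * c F" by simp
    moreover have "c F \<noteq> 0" using F unfolding S_def by simp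
    ultimately have "bd \<Delta> c R \<noteq> 0" by simp
    thus False using c(2) by simp
  qed
  have miss: "\<forall>H. H \<subseteq> \<Union>\<Delta> \<and> H \<notin> \<Delta> \<and> (\<forall>G. G \<subset> H \<longrightarrow> G \<in> \<Delta>) \<longrightarrow> card H \<le> i+1"
  proof (intro allI impI)
    fix H assume "H \<subseteq> \<Union>\<Delta> \<and> H \<notin> \<Delta> \<and> (\<forall>G. G \<subset> H \<longrightarrow> G \<in> \<Delta>)"
    hence "missing_face \<Delta> H" unfolding missing_face_def vertices_def by simp
    thus "card H \<le> i + 1" using mf by simp
  qed
  have "(d + 1) + 1 + (d + 1 - 1) div i \<le> card (\<Union>\<Delta>)"
    using main_bound[OF assms(1) fin ffin dc cardb miss SD Sne Scard pc] by simp
  hence "q * (i + 1) + r + 1 \<le> card (\<Union>\<Delta>)" using qd assms(3) by (simp add: algebra_simps)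
  moreover have "fvec 0 \<Delta> = card (\<Union>\<Delta>)" using singles[OF dc] .
  ultimately show ?thesis using cnt by simp
qed


end
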